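(* Let $s\ge1$ be an integer and $f,g$ formal power series. Then \[ \zeta_s\odot(f*g)=\sum_{\substack{a+c=s\\ a,c\ge0}}(\zeta_a\odot f)*(\zeta_c\odot g)\;-\;\Big(\sum_{\substack{a+c=s-1\\ a,c\ge0}}(\zeta_a\odot f)*(\zeta_c\odot g)\Big)*\zeta_1 . \]
   Context: For an integer $j\ge0$, $\zeta_j(x)=\frac{x^j}{(1-x)^{j+1}}=\sum_{n\ge0}\binom{n}{j}x^n$. For formal power series $f,g$, $f*g:=f(x)\,(1-x)\,g(x)$ (Cauchy product), and the Hadamard product is $\left(\sum_n a_nx^n\right)\odot\left(\sum_n b_nx^n\right)=\sum_n a_nb_nx^n$. *)

theory Defs
  imports "HOL-Computational_Algebra.Formal_Power_Series"
begin

text \<open>zeta_j(x) = x^j/(1-x)^(j+1) = sum_n (n choose j) x^n\<close>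
definition zeta :: "nat \<Rightarrow> 'a::comm_ring_1 fps" where
  "zeta j = Abs_fps (\<lambda>n. of_nat (n choose j))"

definition fstar :: "'a::comm_ring_1 fps \<Rightarrow> 'a fps \<Rightarrow> 'a fps" (infixl "\<star>" 70) where
  "fstar f g = f * (1 - fps_X) * g"

definition hadamard :: "'a::comm_ring_1 fps \<Rightarrow> 'a fps \<Rightarrow> 'a fps" (infixl "\<odot>" 75) where
  "hadamard f g = Abs_fps (\<lambda>n. fps_nth f n * fps_nth g n)"

end

theory Submission
  imports Defs
begin

definition Hs :: "nat \<Rightarrow> 'a::comm_ring_1 fps \<Rightarrow> 'a fps" where
  "Hs s h = Abs_fps (\<lambda>n. of_nat (n choose s) * fps_nth (h) n)"

lemma vand_fps:
  fixes f g :: "'a::comm_ring_1 fps"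
  shows "(\<Sum>a\<le>s. (zeta a \<odot> f) * (zeta (s - a) \<odot> g)) = Hs s (f * g)"
proof (rule fps_ext)
  fix n
  have "fps_nth (\<Sum>a\<le>s. (zeta a \<odot> f) * (zeta (s - a) \<odot> g)) n
      = (\<Sum>a\<le>s. \<Sum>i=0..n. of_nat (i choose a) * fps_nth (f) i * (of_nat ((n - i) choose (s - a)) * fps_nth (g) (n - i)))"
    by (simp add: fps_sum_nth fps_mult_nth zeta_def hadamard_def)
  also have "\<dots> = (\<Sum>i=0..n. \<Sum>a\<le>s. of_nat (i choose a) * fps_nth (f) i * (of_nat ((n - i) choose (s - a)) * fps_nth (g) (n - i)))"
    by (rule sum.swap)
  also have "\<dots> = (\<Sum>i=0..n. of_nat (\<Sum>a\<le>s. (i choose a) * ((n - i) choose (s - a))) * (fps_nth (f) i * fps_nth (g) (n - i)))"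
    by (intro sum.cong refl) (simp add: of_nat_sum sum_distrib_left sum_distrib_right mult_ac)
  also have "\<dots> = (\<Sum>i=0..n. of_nat (n choose s) * (fps_nth (f) i * fps_nth (g) (n - i)))"
    by (intro sum.cong refl) (simp add: vandermonde)
  also have "\<dots> = fps_nth (Hs s (f * g)) n"
    by (simp add: Hs_def fps_mult_nth sum_distrib_left)
  finally show "fps_nth (\<Sum>a\<le>s. (zeta a \<odot> f) * (zeta (s - a) \<odot> g)) n = fps_nth (Hs s (f * g)) n" .
qed

lemma star_sum:
  fixes f g :: "'a::comm_ring_1 fps"
  shows "(\<Sum>a\<le>s. (zeta a \<odot> f) \<star> (zeta (s - a) \<odot> g)) = (1 - fps_X) * Hs s (f * g)"
  unfolding vand_fps[symmetric] fstar_def sum_distrib_left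
  by (intro sum.cong refl) (simp add: ac_simps)

lemma omX: "(1 - fps_X) * F = F - fps_X * (F :: 'a::comm_ring_1 fps)"
  by (simp add: algebra_simps)

lemma zeta1a: "(1 - fps_X) * (zeta 1 :: 'a::comm_ring_1 fps) = Abs_fps (\<lambda>n. if n = 0 then 0 else 1)"
proof (rule fps_ext)
  fix n
  show "fps_nth ((1 - fps_X) * (zeta 1 :: 'a fps)) n = fps_nth (Abs_fps (\<lambda>n. if n = 0 then 0 else 1)) n"
    unfolding omX by (cases n) (simp_all add: zeta_def fps_X_mult_nth)
qed

lemma zeta1: "(1 - fps_X) * (1 - fps_X) * (zeta 1 :: 'a::comm_ring_1 fps) = fps_X"
proof -
  have "(1 - fps_X) * Abs_fps (\<lambda>n. if n = 0 then 0 else 1) = (fps_X :: 'a fps)"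
  proof (rule fps_ext)
    fix n
    show "fps_nth ((1 - fps_X) * Abs_fps (\<lambda>n. if n = 0 then 0 else 1)) n = fps_nth (fps_X :: 'a fps) n"
      unfolding omX by (cases n) (simp_all add: fps_X_mult_nth fps_X_nth)
  qed
  then show ?thesis by (simp only: mult.assoc zeta1a)
qed


theorem lemma2p7:
  fixes f g :: "'a::comm_ring_1 fps" and s :: nat
  assumes "s \<ge> 1"
  shows "zeta s \<odot> (f \<star> g) =
    (\<Sum>a\<le>s. (zeta a \<odot> f) \<star> (zeta (s - a) \<odot> g))
    - (\<Sum>a\<le>s - 1. (zeta a \<odot> f) \<star> (zeta (s - 1 - a) \<odot> g)) \<star> zeta 1"
proof -
  have e: "(\<Sum>a\<le>s - 1. (zeta a \<odot> f) \<star> (zeta (s - 1 - a) \<odot> g)) \<star> zeta 1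
      = fps_X * Hs (s - 1) (f * g)"
  proof -
    have "(\<Sum>a\<le>s - 1. (zeta a \<odot> f) \<star> (zeta (s - 1 - a) \<odot> g)) \<star> zeta 1
       = Hs (s - 1) (f * g) * ((1 - fps_X) * (1 - fps_X) * zeta 1)"
      unfolding star_sum[where s="s - 1" and f=f and g=g] by (simp only: fstar_def mult_ac)
    also have "\<dots> = Hs (s - 1) (f * g) * fps_X" by (simp only: zeta1)
    finally show ?thesis by (metis mult.commute)
  qed
  have fs: "f \<star> g = (1 - fps_X) * (f * g)" unfolding fstar_def by (simp only: mult_ac)
  define h where "h = f * g"
  have main: "fps_nth (zeta s \<odot> (h - fps_X * h)) n = fps_nth (Hs s h - fps_X * Hs s h - fps_X * Hs (s - 1) h) n" for n
  proof (cases n)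
    case 0 then show ?thesis using assms
      by (simp add: hadamard_def zeta_def Hs_def fps_X_mult_nth)
  next
    case (Suc m)
    have b: "(Suc m choose s) = (m choose s) + (m choose (s - 1))"
      using assms by (cases s) auto
    have "fps_nth (zeta s \<odot> (h - fps_X * h)) n = of_nat (Suc m choose s) * (fps_nth h (Suc m) - fps_nth h m)"
      using Suc by (simp add: hadamard_def zeta_def fps_X_mult_nth)
    moreover have "fps_nth (Hs s h - fps_X * Hs s h - fps_X * Hs (s - 1) h) n
       = of_nat (Suc m choose s) * fps_nth h (Suc m) - of_nat (m choose s) * fps_nth h m - of_nat (m choose (s - 1)) * fps_nth h m"
      using Suc by (simp add: Hs_def fps_X_mult_nth)
    moreover have "of_nat (Suc m choose s) * (fps_nth h (Suc m) - fps_nth h m)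
       = of_nat (Suc m choose s) * fps_nth h (Suc m) - of_nat (m choose s) * fps_nth h m - (of_nat (m choose (s - 1)) :: 'a) * fps_nth h m"
      unfolding b of_nat_add by (simp add: algebra_simps)
    ultimately show ?thesis by metis
  qed
  have "zeta s \<odot> (h - fps_X * h) = Hs s h - fps_X * Hs s h - fps_X * Hs (s - 1) h"
    using main by (rule fps_ext)
  then show ?thesis
    unfolding e unfolding star_sum fs omX h_def[symmetric] .
qed

end
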